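(* Let $n\ge1$ and $\lambda,\mu$ partitions with at most $n$ parts. (1) If $\mu\not\supset\lambda$ (i.e. $\mu_i<\lambda_i$ for some $i$), then $s^{\mathbb L}_\lambda(\bar b_{I-\mu}||\mathbf b_\pm)=0$. (2) $s^{\mathbb L}_\lambda(\bar b_{I-\lambda}||\mathbf b_\pm)=\prod_{(i,j)\in\lambda}\big(\bar b_{i-\lambda_i}+_Fb_{\lambda'_j-j+1}\big)$, where the product is over the boxes $(i,j)$ (row $i$, column $j$) of the Young diagram of $\lambda$ and $\lambda'$ is the conjugate partition.
   Context: $\mathbb L$ is the Lazard ring with universal formal group law $u+_Fv$ and formal inverse $\bar u$ ($u+_F\bar u=0$). Let $\mathbf b_\pm=(\ldots,b_{-1},b_0,b_1,b_2,\ldots)$ be a doubly infinite sequence of indeterminates and set $(t||\mathbf b_\pm)^k_n=\prod_{i=1}^k(t+_Fb_{n+1-i})$. For a partition $\lambda=(\lambda_1\ge\cdots\ge\lambda_n\ge0)$, $$s^{\mathbb L}_\lambda(x_1,\ldots,x_n||\mathbf b_\pm)=\sum_{w\in S_n}w\Big(\frac{\prod_{i=1}^n(x_i||\mathbf b_\pm)^{\lambda_i+n-i}_n}{\prod_{1\le i<j\le n}(x_i+_F\bar x_j)}\Big),$$ with $S_n$ permuting $x_1,\dots,x_n$. For a partition $\mu$, $\bar b_{I-\mu}$ denotes the specialization $x_i=\bar b_{i-\mu_i}$ for $i=1,\ldots,n$. *)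

theory Defs
  imports "HOL-Combinatorics.Permutations"
begin

text \<open>Abstract formal group law data: a set M (playing the role of the elements of
  positive order, on which F converges) inside a field, a binary operation fadd
  (u +_F v) and formal inverse finv (bar u), satisfying the group-law axioms on M.\<close>
definition fgl_on :: "'a::field set \<Rightarrow> ('a \<Rightarrow> 'a \<Rightarrow> 'a) \<Rightarrow> ('a \<Rightarrow> 'a) \<Rightarrow> bool" where
  "fgl_on M fadd finv \<longleftrightarrow>
     0 \<in> M \<and>
     (\<forall>u\<in>M. \<forall>v\<in>M. fadd u v \<in> M) \<and>
     (\<forall>u\<in>M. finv u \<in> M) \<and>
     (\<forall>u\<in>M. fadd u 0 = u) \<and>
     (\<forall>u\<in>M. \<forall>v\<in>M. fadd u v = fadd v u) \<and>
     (\<forall>u\<in>M. \<forall>v\<in>M. \<forall>w\<in>M. fadd (fadd u v) w = fadd u (fadd v w)) \<and>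
     (\<forall>u\<in>M. fadd u (finv u) = 0)"

text \<open>Partitions with at most n parts, indexed from 1 (value at 0 is irrelevant).\<close>
definition partition_le :: "nat \<Rightarrow> (nat \<Rightarrow> nat) \<Rightarrow> bool" where
  "partition_le n lam \<longleftrightarrow>
     (\<forall>i j. 1 \<le> i \<longrightarrow> i \<le> j \<longrightarrow> lam j \<le> lam i) \<and> (\<forall>i. n < i \<longrightarrow> lam i = 0)"

definition conj_part :: "(nat \<Rightarrow> nat) \<Rightarrow> nat \<Rightarrow> nat" where
  "conj_part lam j = card {i. 1 \<le> i \<and> j \<le> lam i}"

definition boxes :: "(nat \<Rightarrow> nat) \<Rightarrow> (nat \<times> nat) set" where
  "boxes lam = {(i, j). 1 \<le> i \<and> 1 \<le> j \<and> j \<le> lam i}"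

definition fact_pow :: "('a \<Rightarrow> 'a \<Rightarrow> 'a::comm_ring_1) \<Rightarrow> 'a \<Rightarrow> (int \<Rightarrow> 'a) \<Rightarrow> nat \<Rightarrow> nat \<Rightarrow> 'a" where
  "fact_pow fadd t b k n = (\<Prod>i = 1..k. fadd t (b (int n + 1 - int i)))"

text \<open>The factorial Schur function s^L_lambda(x_1,...,x_n || b), evaluated at a point
  x :: nat => 'a (only x 1, ..., x n matter), via the symmetrization formula.\<close>
definition sL :: "('a \<Rightarrow> 'a \<Rightarrow> 'a::field) \<Rightarrow> ('a \<Rightarrow> 'a) \<Rightarrow> nat \<Rightarrow> (nat \<Rightarrow> nat)
                   \<Rightarrow> (int \<Rightarrow> 'a) \<Rightarrow> (nat \<Rightarrow> 'a) \<Rightarrow> 'a" where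
  "sL fadd finv n lam b x =
     (\<Sum>w \<in> {w. w permutes {1..n}}.
        (\<Prod>i = 1..n. fact_pow fadd (x (w i)) b (lam i + n - i) n) /
        (\<Prod>i = 1..n. \<Prod>j \<in> {i<..n}. fadd (x (w i)) (finv (x (w j)))))"

definition spec_pt :: "('a \<Rightarrow> 'a) \<Rightarrow> (int \<Rightarrow> 'a) \<Rightarrow> (nat \<Rightarrow> nat) \<Rightarrow> nat \<Rightarrow> 'a" where
  "spec_pt finv b mu i = finv (b (int i - int (mu i)))"

end

theory Submission imports Defs begin

lemma fgl_facts:
  assumes "fgl_on M fadd finv" "u \<in> M"
  shows "fadd (finv u) u = 0" "finv (finv u) = u"
proof -
  have iM: "finv u \<in> M" and iiM: "finv (finv u) \<in> M" using assms unfolding fgl_on_def by auto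
  show z: "fadd (finv u) u = 0" using assms iM unfolding fgl_on_def by metis
  have z2: "fadd (finv u) (finv (finv u)) = 0" using assms iM unfolding fgl_on_def by metis
  have "u = fadd u 0" using assms unfolding fgl_on_def by metis
  also have "\<dots> = fadd u (fadd (finv u) (finv (finv u)))" using z2 by simp
  also have "\<dots> = fadd (fadd u (finv u)) (finv (finv u))" using assms iM iiM unfolding fgl_on_def by metis
  also have "\<dots> = fadd 0 (finv (finv u))" using assms unfolding fgl_on_def by metis
  also have "\<dots> = finv (finv u)" using assms iiM unfolding fgl_on_def by metis
  finally show "finv (finv u) = u" by simp
qed

lemma part_strict:
  assumes "partition_le n lam" "1 \<le> i" "i < j"
  shows "int i - int (lam i) < int j - int (lam j)"
proof -
  have "lam j \<le> lam i" using assms unfolding partition_le_def by auto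
  then show ?thesis using assms(3) by linarith
qed

lemma part_mono:
  assumes "partition_le n lam" "1 \<le> i" "i \<le> j"
  shows "int i - int (lam i) \<le> int j - int (lam j)"
  using part_strict[OF assms(1,2)] assms(3) by (cases "i = j") (auto simp: less_le_not_le order.strict_iff_not le_neq_implies_less)

lemma term_zero:
  fixes fadd :: "'a \<Rightarrow> 'a \<Rightarrow> 'a::field"
  assumes fz: "\<And>q. fadd (finv (b q)) (b q) = 0"
    and w: "w permutes {1..n}" and i: "i \<in> {1..n}"
    and lt: "int i - int (lam i) < int (w i) - int (mu (w i))"
  shows "fact_pow fadd (spec_pt finv b mu (w i)) b (lam i + n - i) n = 0"
proof -
  have wi: "w i \<in> {1..n}" using permutes_in_image[OF w] i by simp
  define q where "q = int (w i) - int (mu (w i))"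
  define k where "k = nat (int n + 1 - q)"
  have qn: "q \<le> int n" using wi by (simp add: q_def)
  have lt': "int i - int (lam i) < q" using lt unfolding q_def .
  have iv: "i \<le> n" using i by simp
  have e: "int (lam i + n - i) = int (lam i) + int n - int i" using iv by (simp add: of_nat_diff)
  have ik: "int k = int n + 1 - q" unfolding k_def using qn by simp
  have "1 \<le> k" using ik qn by linarith
  moreover have "int k \<le> int (lam i + n - i)" unfolding e ik using lt' by linarith
  ultimately have k1: "k \<in> {1..lam i + n - i}" by simp
  have kq: "int n + 1 - int k = q" using qn unfolding k_def by simp
  have "fadd (spec_pt finv b mu (w i)) (b (int n + 1 - int k)) = 0"
    unfolding kq spec_pt_def q_def using fz by simp
  then show ?thesis unfolding fact_pow_def by (intro prod_zero) (use k1 in auto)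
qed

lemma comb1:
  assumes lam: "partition_le n lam" and mu: "partition_le n mu" and w: "w permutes {1..n}"
    and le: "\<forall>i\<in>{1..n}. int (w i) - int (mu (w i)) \<le> int i - int (lam i)"
    and i: "i \<in> {1..n}"
  shows "lam i \<le> mu i"
proof (rule ccontr)
  assume "\<not> lam i \<le> mu i"
  hence ai: "int i - int (lam i) < int i - int (mu i)" by simp
  have "w ` {1..i} \<subseteq> {1..<i}"
  proof
    fix y assume "y \<in> w ` {1..i}"
    then obtain j where j: "j \<in> {1..i}" "y = w j" by auto
    have jn: "j \<in> {1..n}" using j i by auto
    have wj: "w j \<in> {1..n}" using permutes_in_image[OF w] jn by simp
    have "int (w j) - int (mu (w j)) \<le> int j - int (lam j)" using le jn by auto
    also have "\<dots> \<le> int i - int (lam i)" using part_mono[OF lam, of j i] j by auto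
    finally have "int (w j) - int (mu (w j)) < int i - int (mu i)" using ai by simp
    hence "w j < i" using part_mono[OF mu, of i "w j"] i by (cases "i \<le> w j") auto
    then show "y \<in> {1..<i}" using wj j by auto
  qed
  moreover have "inj_on w {1..i}" using permutes_inj[OF w] by (auto intro: inj_on_subset)
  ultimately have "card {1..i} \<le> card {1..<i}"
    by (metis card_image card_mono finite_atLeastLessThan)
  then show False using i by (cases i) auto
qed

lemma comb2:
  assumes lam: "partition_le n lam" and w: "w permutes {1..n}"
    and le: "\<forall>i\<in>{1..n}. int (w i) - int (lam (w i)) \<le> int i - int (lam i)"
  shows "w = id"
proof -
  have wle: "w i \<le> i" if i: "i \<in> {1..n}" for i
  proof (rule ccontr)
    assume "\<not> w i \<le> i"
    hence "int i - int (lam i) < int (w i) - int (lam (w i))" using part_strict[OF lam, of i "w i"] i by auto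
    moreover have "int (w i) - int (lam (w i)) \<le> int i - int (lam i)" using le i by blast
    ultimately show False by linarith
  qed
  have "sum w {1..n} = sum id {1..n}"
    using sum.permute[OF w, of id] by (simp add: comp_def)
  hence eq: "w i = i" if "i \<in> {1..n}" for i
    using sum_mono_inv[of w "{1..n}" id i] wle that by auto
  show ?thesis
  proof
    fix x show "w x = id x"
      using eq permutes_not_in[OF w, of x] by (cases "x \<in> {1..n}") auto
  qed
qed


lemma conj_sub:
  assumes lam: "partition_le n lam" and j: "1 \<le> j"
  shows "{i. 1 \<le> i \<and> j \<le> lam i} \<subseteq> {1..n}"
proof
  fix i assume "i \<in> {i. 1 \<le> i \<and> j \<le> lam i}"
  then show "i \<in> {1..n}" using lam j unfolding partition_le_def by (auto simp: not_le[symmetric])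
qed

lemma conj_le:
  assumes "partition_le n lam" "1 \<le> j" shows "conj_part lam j \<le> n"
proof -
  have "conj_part lam j \<le> card {1..n}"
    unfolding conj_part_def by (rule card_mono[OF finite_atLeastAtMost conj_sub[OF assms]])
  then show ?thesis by simp
qed

lemma conj_anti:
  assumes lam: "partition_le n lam" and "1 \<le> j" "j \<le> j'"
  shows "conj_part lam j' \<le> conj_part lam j"
  unfolding conj_part_def
  by (rule card_mono[OF finite_subset[OF conj_sub[OF lam assms(2)]]]) (use assms in auto)

lemma conj_iff:
  assumes lam: "partition_le n lam" and i: "1 \<le> i" and j: "1 \<le> j"
  shows "i \<le> conj_part lam j \<longleftrightarrow> j \<le> lam i"
proof
  let ?A = "{i. 1 \<le> i \<and> j \<le> lam i}"
  have fin: "finite ?A" using finite_subset[OF conj_sub[OF lam j]] by simp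
  assume "i \<le> conj_part lam j"
  show "j \<le> lam i"
  proof (rule ccontr)
    assume nj: "\<not> j \<le> lam i"
    have "?A \<subseteq> {1..<i}"
    proof
      fix k assume k: "k \<in> ?A"
      have "k < i"
      proof (rule ccontr)
        assume "\<not> k < i"
        hence "lam k \<le> lam i" using lam i unfolding partition_le_def by auto
        then show False using k nj by auto
      qed
      then show "k \<in> {1..<i}" using k by auto
    qed
    hence "card ?A \<le> i - 1" using card_mono[of "{1..<i}" ?A] by auto
    then show False using \<open>i \<le> conj_part lam j\<close> i unfolding conj_part_def by auto
  qed
next
  let ?A = "{i. 1 \<le> i \<and> j \<le> lam i}"
  have fin: "finite ?A" using finite_subset[OF conj_sub[OF lam j]] by simp
  assume ji: "j \<le> lam i"
  have "{1..i} \<subseteq> ?A"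
  proof
    fix k assume k: "k \<in> {1..i}"
    hence "lam i \<le> lam k" using lam unfolding partition_le_def by auto
    then show "k \<in> ?A" using k ji by auto
  qed
  hence "card {1..i} \<le> card ?A" by (rule card_mono[OF fin])
  then show "i \<le> conj_part lam j" unfolding conj_part_def by simp
qed


lemma inj_p: "partition_le n lam \<Longrightarrow> inj_on (\<lambda>j. int j - int (lam j)) {i<..n}"
proof (rule inj_onI)
  fix x y assume lam: "partition_le n lam" and x: "x \<in> {i<..n}" and y: "y \<in> {i<..n}"
    and e: "int x - int (lam x) = int y - int (lam y)"
  show "x = y"
  proof (rule linorder_cases[of x y])
    assume "x < y" then show ?thesis using part_strict[OF lam, of x y] x e by simp
  next
    assume "y < x" then show ?thesis using part_strict[OF lam, of y x] y e by simp
  qed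
qed

lemma inj_c:
  assumes lam: "partition_le n lam"
  shows "inj_on (\<lambda>j. int (conj_part lam j) - int j + 1) {1..m}"
proof -
  have "int (conj_part lam j') - int j' + 1 < int (conj_part lam j) - int j + 1"
    if "j \<in> {1..m}" "j' \<in> {1..m}" "j < j'" for j j'
    using conj_anti[OF lam, of j j'] that by auto
  then show ?thesis
  proof (intro inj_onI)
    fix x y assume H: "\<And>j j'. j \<in> {1..m} \<Longrightarrow> j' \<in> {1..m} \<Longrightarrow> j < j' \<Longrightarrow>
        int (conj_part lam j') - int j' + 1 < int (conj_part lam j) - int j + 1"
      and x: "x \<in> {1..m}" and y: "y \<in> {1..m}"
      and e: "int (conj_part lam x) - int x + 1 = int (conj_part lam y) - int y + 1"
    show "x = y"
    proof (rule linorder_cases[of x y])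
      assume "x < y" then show ?thesis using H[OF x y] e by simp
    next
      assume "y < x" then show ?thesis using H[OF y x] e by simp
    qed
  qed
qed

lemma disj:
  assumes lam: "partition_le n lam" and i: "i \<in> {1..n}"
  shows "(\<lambda>j. int j - int (lam j)) ` {i<..n} \<inter> (\<lambda>j. int (conj_part lam j) - int j + 1) ` {1..lam i} = {}"
proof -
  have "int i' - int (lam i') \<noteq> int (conj_part lam j) - int j + 1" if "1 \<le> i'" "1 \<le> j" for i' j
  proof (cases "j \<le> lam i'")
    case True
    hence "i' \<le> conj_part lam j" using conj_iff[OF lam that] by simp
    then show ?thesis using True by linarith
  next
    case False
    hence "\<not> i' \<le> conj_part lam j" using conj_iff[OF lam that] by simp
    then show ?thesis using False by linarith
  qed
  then show ?thesis using i by (auto simp del: One_nat_def)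
qed

lemma decomp:
  assumes lam: "partition_le n lam" and i: "i \<in> {1..n}"
  shows "{int i - int (lam i) + 1 .. int n} = (\<lambda>j. int j - int (lam j)) ` {i<..n} \<union> (\<lambda>j. int (conj_part lam j) - int j + 1) ` {1..lam i}"
proof -
  let ?P = "(\<lambda>j. int j - int (lam j)) ` {i<..n}"
  let ?C = "(\<lambda>j. int (conj_part lam j) - int j + 1) ` {1..lam i}"
  have s1: "?P \<subseteq> {int i - int (lam i) + 1 .. int n}"
  proof
    fix x assume "x \<in> ?P"
    then obtain j where j: "j \<in> {i<..n}" "x = int j - int (lam j)" by auto
    then show "x \<in> {int i - int (lam i) + 1 .. int n}" using part_strict[OF lam, of i j] i by auto
  qed
  have s2: "?C \<subseteq> {int i - int (lam i) + 1 .. int n}"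
  proof
    fix x assume "x \<in> ?C"
    then obtain j where j: "j \<in> {1..lam i}" "x = int (conj_part lam j) - int j + 1" by auto
    have "i \<le> conj_part lam j" using conj_iff[OF lam, of i j] i j by auto
    moreover have "conj_part lam j \<le> n" using conj_le[OF lam] j by auto
    ultimately show "x \<in> {int i - int (lam i) + 1 .. int n}" using j by auto
  qed
  have "card (?P \<union> ?C) = card ?P + card ?C"
    by (rule card_Un_disjoint) (use disj[OF lam i] in auto)
  also have "\<dots> = (n - i) + lam i"
    using card_image[OF inj_p[OF lam, of i]] card_image[OF inj_c[OF lam, of "lam i"]] by simp
  also have "\<dots> = card {int i - int (lam i) + 1 .. int n}" using i by auto
  finally show ?thesis using card_subset_eq[of "{int i - int (lam i) + 1 .. int n}" "?P \<union> ?C"] s1 s2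
    by auto
qed


lemma fact_pow_reindex:
  assumes i: "i \<in> {1..n}"
  shows "fact_pow fadd t b (lam i + n - i) n = (\<Prod>q \<in> {int i - int (lam i) + 1 .. int n}. fadd t (b q))"
  unfolding fact_pow_def
  by (rule prod.reindex_bij_witness[where i="\<lambda>q. nat (int n + 1 - q)" and j="\<lambda>k. int n + 1 - int k"])
     (use i in auto)

lemma boxes_eq:
  assumes lam: "partition_le n lam"
  shows "boxes lam = Sigma {1..n} (\<lambda>i. {1..lam i})"
  using lam unfolding boxes_def partition_le_def by (auto simp: not_le[symmetric])

lemma id_term:
  fixes fadd :: "'a \<Rightarrow> 'a \<Rightarrow> 'a::field"
  assumes ff: "\<And>q. finv (finv (b q)) = b q"
    and generic: "\<And>p q. p \<noteq> q \<Longrightarrow> fadd (finv (b p)) (b q) \<noteq> 0"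
    and lam: "partition_le n lam"
  shows "(\<Prod>i=1..n. fact_pow fadd (spec_pt finv b lam i) b (lam i + n - i) n) /
         (\<Prod>i=1..n. \<Prod>j\<in>{i<..n}. fadd (spec_pt finv b lam i) (finv (spec_pt finv b lam j)))
       = (\<Prod>(i, j) \<in> boxes lam.
              fadd (finv (b (int i - int (lam i)))) (b (int (conj_part lam j) - int j + 1)))"
proof -
  define F where "F p q = fadd (finv (b p)) (b q)" for p q
  define pp where "pp = (\<lambda>j. int j - int (lam j))"
  define cc where "cc = (\<lambda>j. int (conj_part lam j) - int j + 1)"
  define Dd where "Dd i = (\<Prod>j\<in>{i<..n}. F (pp i) (pp j))" for i
  define R where "R i = (\<Prod>j\<in>{1..lam i}. F (pp i) (cc j))" for i
  have N: "fact_pow fadd (spec_pt finv b lam i) b (lam i + n - i) n = Dd i * R i" if i: "i \<in> {1..n}" for i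
  proof -
    have U: "{int i - int (lam i) + 1 .. int n} = pp ` {i<..n} \<union> cc ` {1..lam i}"
      using decomp[OF lam i] unfolding pp_def cc_def .
    have "fact_pow fadd (spec_pt finv b lam i) b (lam i + n - i) n
        = (\<Prod>q \<in> {int i - int (lam i) + 1 .. int n}. fadd (spec_pt finv b lam i) (b q))"
      by (rule fact_pow_reindex[OF i])
    also have "\<dots> = (\<Prod>q \<in> pp ` {i<..n} \<union> cc ` {1..lam i}. F (pp i) q)"
      unfolding U by (simp add: F_def pp_def spec_pt_def)
    also have "\<dots> = (\<Prod>q \<in> pp ` {i<..n}. F (pp i) q) * (\<Prod>q \<in> cc ` {1..lam i}. F (pp i) q)"
      by (rule prod.union_disjoint) (use disj[OF lam i] in \<open>auto simp: pp_def cc_def\<close>)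
    also have "\<dots> = Dd i * R i"
      unfolding Dd_def R_def
      using prod.reindex[OF inj_p[OF lam, of i], of "F (pp i)"]
        prod.reindex[OF inj_c[OF lam, of "lam i"], of "F (pp i)"]
      by (simp add: pp_def cc_def comp_def)
    finally show ?thesis .
  qed
  have Dq: "(\<Prod>j\<in>{i<..n}. fadd (spec_pt finv b lam i) (finv (spec_pt finv b lam j))) = Dd i" for i
    unfolding Dd_def F_def spec_pt_def pp_def using ff by simp
  have Dnz: "Dd i \<noteq> 0" if i: "i \<in> {1..n}" for i
    unfolding Dd_def F_def
  proof (subst prod_zero_iff, simp, safe)
    fix j assume j: "j \<in> {i<..n}" and z: "fadd (finv (b (pp i))) (b (pp j)) = 0"
    have "pp i < pp j" using part_strict[OF lam, of i j] i j by (auto simp: pp_def)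
    then show False using generic[of "pp i" "pp j"] z by auto
  qed
  have "(\<Prod>i=1..n. fact_pow fadd (spec_pt finv b lam i) b (lam i + n - i) n) /
         (\<Prod>i=1..n. \<Prod>j\<in>{i<..n}. fadd (spec_pt finv b lam i) (finv (spec_pt finv b lam j)))
       = (\<Prod>i=1..n. Dd i * R i) / (\<Prod>i=1..n. Dd i)"
    using N Dq by simp
  also have "\<dots> = (\<Prod>i=1..n. R i)"
    using Dnz by (simp add: prod.distrib prod_zero_iff)
  also have "\<dots> = (\<Prod>(i, j) \<in> boxes lam. F (pp i) (cc j))"
    unfolding boxes_eq[OF lam] R_def by (subst prod.Sigma) auto
  finally show ?thesis unfolding F_def pp_def cc_def .
qed


theorem mainTheorem12:
  fixes M :: "'a::field set" and fadd :: "'a \<Rightarrow> 'a \<Rightarrow> 'a" and finv :: "'a \<Rightarrow> 'a"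
    and b :: "int \<Rightarrow> 'a" and n :: nat and lam mu :: "nat \<Rightarrow> nat"
  assumes fgl: "fgl_on M fadd finv"
    and bM: "\<And>p. b p \<in> M"
    and generic: "\<And>p q. p \<noteq> q \<Longrightarrow> fadd (finv (b p)) (b q) \<noteq> 0"
    and n: "1 \<le> n"
    and lam: "partition_le n lam" and mu: "partition_le n mu"
  shows "((\<exists>i\<in>{1..n}. mu i < lam i) \<longrightarrow> sL fadd finv n lam b (spec_pt finv b mu) = 0)
       \<and> sL fadd finv n lam b (spec_pt finv b lam) =
           (\<Prod>(i, j) \<in> boxes lam.
              fadd (finv (b (int i - int (lam i)))) (b (int (conj_part lam j) - int j + 1)))"
proof -
  have fz: "\<And>q. fadd (finv (b q)) (b q) = 0" using fgl_facts(1)[OF fgl bM] .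
  have ff: "\<And>q. finv (finv (b q)) = b q" using fgl_facts(2)[OF fgl bM] .
  define T where "T nu w = (\<Prod>i = 1..n. fact_pow fadd (spec_pt finv b nu (w i)) b (lam i + n - i) n) /
        (\<Prod>i = 1..n. \<Prod>j \<in> {i<..n}. fadd (spec_pt finv b nu (w i)) (finv (spec_pt finv b nu (w j))))"
    for nu w
  have sLT: "sL fadd finv n lam b (spec_pt finv b nu) = (\<Sum>w \<in> {w. w permutes {1..n}}. T nu w)" for nu
    unfolding sL_def T_def ..
  have tz: "T nu w = 0" if w: "w permutes {1..n}" and i: "i \<in> {1..n}"
    and lt: "int i - int (lam i) < int (w i) - int (nu (w i))" for nu w i
  proof -
    have "(\<Prod>i = 1..n. fact_pow fadd (spec_pt finv b nu (w i)) b (lam i + n - i) n) = 0"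
      by (rule prod_zero) (use term_zero[where fadd=fadd and finv=finv and b=b and lam=lam and mu=nu and w=w and i=i and n=n, OF fz w i lt] i in auto)
    then show ?thesis unfolding T_def by simp
  qed
  have P1: "sL fadd finv n lam b (spec_pt finv b mu) = 0" if ex: "\<exists>i\<in>{1..n}. mu i < lam i"
    unfolding sLT
  proof (rule sum.neutral, safe)
    fix w assume w: "w permutes {1..n}"
    show "T mu w = 0"
    proof (cases "\<forall>i\<in>{1..n}. int (w i) - int (mu (w i)) \<le> int i - int (lam i)")
      case True
      then show ?thesis using comb1[OF lam mu w True] ex by fastforce
    next
      case False
      then obtain i where "i \<in> {1..n}" "int i - int (lam i) < int (w i) - int (mu (w i))"
        by (auto simp: not_le)
      then show ?thesis using tz[OF w] by blast
    qed
  qed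
  have "sL fadd finv n lam b (spec_pt finv b lam) = (\<Sum>w \<in> {w. w permutes {1..n}}. if w = id then T lam id else 0)"
    unfolding sLT
  proof (rule sum.cong[OF refl])
    fix w assume w: "w \<in> {w. w permutes {1..n}}"
    hence w: "w permutes {1..n}" by simp
    show "T lam w = (if w = id then T lam id else 0)"
    proof (cases "w = id")
      case False
      hence "\<not> (\<forall>i\<in>{1..n}. int (w i) - int (lam (w i)) \<le> int i - int (lam i))"
        using comb2[OF lam w] by blast
      then obtain i where "i \<in> {1..n}" "int i - int (lam i) < int (w i) - int (lam (w i))"
        by (auto simp: not_le)
      then show ?thesis using tz[OF w] False by auto
    qed simp
  qed
  also have "\<dots> = T lam id" using permutes_id[of "{1..n}"] finite_permutations[of "{1..n}"]
    by (simp add: sum.delta)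
  also have "\<dots> = (\<Prod>(i, j) \<in> boxes lam.
              fadd (finv (b (int i - int (lam i)))) (b (int (conj_part lam j) - int j + 1)))"
    unfolding T_def using id_term[where fadd=fadd and finv=finv and b=b and lam=lam and n=n, OF ff generic lam] by simp
  finally show ?thesis using P1 by blast
qed

end
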